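(* Let $k\in\mathbb{N}$ be fixed. Then the function $\beta\mapsto\delta(k,\beta)$ is strictly increasing on $[1,+\infty)$. Moreover $\delta(k,1)<0$ and $\delta(k,\sqrt2)>0$.
   Context: $\mathbb{N}=\{0,1,2,\dots\}$. For $t\ge 0$ let $q(t)=\lfloor t+1\rfloor/2$ if $\lfloor t\rfloor$ is odd and $q(t)=t-\lfloor t\rfloor/2$ if $\lfloor t\rfloor$ is even, and $p(t)=t+1-q(t)$. For $\beta\ge1$ let $\hat\sigma(t,\beta)\in(0,1)$ be the unique solution $\sigma$ of $\frac{p(t)\sigma}{\sqrt{1-\sigma^2}}+\frac{q(t)\sigma}{\sqrt{\beta^2-\sigma^2}}=1$, and $l(t,\beta)=\frac{p(t)}{\sqrt{1-\hat\sigma^2}}+\frac{\beta^2q(t)}{\sqrt{\beta^2-\hat\sigma^2}}-t-\sqrt2$. For $k\in\mathbb{N}$, $\delta(k,\beta)=l(2k+2,\beta)-l(2k,\beta)$. *)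

theory Defs
  imports "HOL-Analysis.Analysis"
begin

definition qf :: "real \<Rightarrow> real" where
  "qf t = (if odd \<lfloor>t\<rfloor> then real_of_int \<lfloor>t + 1\<rfloor> / 2 else t - real_of_int \<lfloor>t\<rfloor> / 2)"

definition pf :: "real \<Rightarrow> real" where
  "pf t = t + 1 - qf t"

definition sigma_hat :: "real \<Rightarrow> real \<Rightarrow> real" where
  "sigma_hat t \<beta> = (THE \<sigma>. 0 < \<sigma> \<and> \<sigma> < 1 \<and>
      pf t * \<sigma> / sqrt (1 - \<sigma>\<^sup>2) + qf t * \<sigma> / sqrt (\<beta>\<^sup>2 - \<sigma>\<^sup>2) = 1)"

definition lf :: "real \<Rightarrow> real \<Rightarrow> real" where
  "lf t \<beta> = pf t / sqrt (1 - (sigma_hat t \<beta>)\<^sup>2)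
      + \<beta>\<^sup>2 * qf t / sqrt (\<beta>\<^sup>2 - (sigma_hat t \<beta>)\<^sup>2) - t - sqrt 2"

definition delta :: "nat \<Rightarrow> real \<Rightarrow> real" where
  "delta k \<beta> = lf (2 * real k + 2) \<beta> - lf (2 * real k) \<beta>"

end

theory Submission
  imports Defs
begin

definition GG :: "real \<Rightarrow> real \<Rightarrow> real \<Rightarrow> real \<Rightarrow> real" where
  "GG p q b s = p * s / sqrt (1 - s\<^sup>2) + q * s / sqrt (b\<^sup>2 - s\<^sup>2)"

definition FF :: "real \<Rightarrow> real \<Rightarrow> real \<Rightarrow> real \<Rightarrow> real" where
  "FF p q b x = p * sqrt (1 - x\<^sup>2) + q * sqrt (b\<^sup>2 - x\<^sup>2) + x"

lemma sqlt: "0 \<le> (x::real) \<Longrightarrow> x < c \<Longrightarrow> x\<^sup>2 < c\<^sup>2"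
  by (simp add: power_strict_mono)

lemma tangent:
  fixes c x s :: real
  assumes "0 \<le> x" "x \<le> c" "0 \<le> s" "s < c"
  shows "sqrt (c\<^sup>2 - x\<^sup>2) \<le> sqrt (c\<^sup>2 - s\<^sup>2) - s * (x - s) / sqrt (c\<^sup>2 - s\<^sup>2)"
proof -
  define R where "R = sqrt (c\<^sup>2 - s\<^sup>2)"
  have cs: "c\<^sup>2 - s\<^sup>2 > 0" using assms by (simp add: power2_eq_square mult_strict_mono)
  have cx: "c\<^sup>2 - x\<^sup>2 \<ge> 0" using assms by (simp add: power2_eq_square mult_mono)
  have R0: "R > 0" using cs R_def by simp
  have R2: "R\<^sup>2 = c\<^sup>2 - s\<^sup>2" using cs R_def by simp
  have "(c\<^sup>2 - x\<^sup>2) * (c\<^sup>2 - s\<^sup>2) \<le> (c\<^sup>2 - s * x)\<^sup>2"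
  proof -
    have "(c\<^sup>2 - s * x)\<^sup>2 - (c\<^sup>2 - x\<^sup>2) * (c\<^sup>2 - s\<^sup>2) = c\<^sup>2 * (x - s)\<^sup>2"
      by (simp add: power2_eq_square algebra_simps)
    thus ?thesis by (smt (verit) zero_le_power2 mult_nonneg_nonneg)
  qed
  moreover have "c\<^sup>2 - s * x \<ge> 0" using assms
    by (smt (verit) mult_mono power2_eq_square)
  ultimately have "sqrt (c\<^sup>2 - x\<^sup>2) * R \<le> c\<^sup>2 - s * x"
    unfolding R_def by (metis real_sqrt_le_mono real_sqrt_abs abs_of_nonneg real_sqrt_mult)
  hence "sqrt (c\<^sup>2 - x\<^sup>2) \<le> (c\<^sup>2 - s * x) / R" using R0 by (simp add: field_simps)
  also have "(c\<^sup>2 - s * x) / R = R - s * (x - s) / R" using R0 R2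
    by (simp add: field_simps power2_eq_square)
  finally show ?thesis unfolding R_def .
qed

lemma maxF:
  assumes p: "p \<ge> 0" and q: "q \<ge> 0" and b: "b \<ge> 1" and s: "0 \<le> s" "s < 1"
    and G: "GG p q b s = 1" and x: "0 \<le> x" "x \<le> 1"
  shows "FF p q b x \<le> FF p q b s"
proof -
  define R1 where "R1 = sqrt (1 - s\<^sup>2)"
  define R2 where "R2 = sqrt (b\<^sup>2 - s\<^sup>2)"
  have t1: "sqrt (1\<^sup>2 - x\<^sup>2) \<le> sqrt (1\<^sup>2 - s\<^sup>2) - s * (x - s) / sqrt (1\<^sup>2 - s\<^sup>2)"
    by (rule tangent) (use s x in auto)
  have t2: "sqrt (b\<^sup>2 - x\<^sup>2) \<le> R2 - s * (x - s) / R2"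
    unfolding R2_def by (rule tangent) (use s x b in auto)
  have "FF p q b x \<le> p * (R1 - s * (x - s) / R1) + q * (R2 - s * (x - s) / R2) + x"
    unfolding FF_def R1_def using t1 t2 p q by (auto intro!: add_mono mult_left_mono)
  also have "\<dots> = FF p q b s + (x - s) * (1 - GG p q b s)"
    unfolding FF_def GG_def R1_def R2_def by (simp add: algebra_simps)
  also have "\<dots> = FF p q b s" using G by simp
  finally show ?thesis .
qed

lemma valF:
  assumes b: "b \<ge> 1" and s: "0 \<le> s" "s < 1" and G: "GG p q b s = 1"
  shows "p / sqrt (1 - s\<^sup>2) + b\<^sup>2 * q / sqrt (b\<^sup>2 - s\<^sup>2) = FF p q b s"
proof -
  define R1 where "R1 = sqrt (1 - s\<^sup>2)"
  define R2 where "R2 = sqrt (b\<^sup>2 - s\<^sup>2)"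
  have s2: "s\<^sup>2 < 1" using sqlt[of s 1] s by simp
  have "s\<^sup>2 < b\<^sup>2" using sqlt[of s b] s b by simp
  hence R2p: "R2 > 0" "R2\<^sup>2 = b\<^sup>2 - s\<^sup>2" unfolding R2_def by auto
  have R1p: "R1 > 0" "R1\<^sup>2 = 1 - s\<^sup>2" unfolding R1_def using s2 by auto
  have "FF p q b s = p * R1 + q * R2 + s * GG p q b s" using G unfolding FF_def R1_def R2_def by simp
  also have "\<dots> = p * (R1\<^sup>2 + s\<^sup>2) / R1 + q * (R2\<^sup>2 + s\<^sup>2) / R2"
    unfolding GG_def R1_def[symmetric] R2_def[symmetric] using R1p(1) R2p(1)
    by (simp add: field_simps power2_eq_square)
  also have "\<dots> = p / R1 + b\<^sup>2 * q / R2" using R1p R2p by simp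
  finally show ?thesis unfolding R1_def R2_def by simp
qed

lemma hbounds:
  assumes "1 \<le> b" "b < b'" "0 \<le> x" "x < 1"
  shows "b' - b \<le> sqrt (b'\<^sup>2 - x\<^sup>2) - sqrt (b\<^sup>2 - x\<^sup>2)"
    and "sqrt (b'\<^sup>2 - x\<^sup>2) - sqrt (b\<^sup>2 - x\<^sup>2) \<le> (b' - b) / sqrt (1 - x\<^sup>2)"
proof -
  define A where "A = sqrt (b'\<^sup>2 - x\<^sup>2)"
  define B where "B = sqrt (b\<^sup>2 - x\<^sup>2)"
  have x2: "x\<^sup>2 < 1" using sqlt[of x 1] assms by simp
  have bx: "x\<^sup>2 < b\<^sup>2" using sqlt[of x b] assms by simp
  have b'x: "x\<^sup>2 < b'\<^sup>2" using sqlt[of x b'] assms by simp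
  have A2: "A\<^sup>2 = b'\<^sup>2 - x\<^sup>2" "A > 0" using b'x A_def by auto
  have B2: "B\<^sup>2 = b\<^sup>2 - x\<^sup>2" "B > 0" using bx B_def by auto
  have eq: "A - B = (b'\<^sup>2 - b\<^sup>2) / (A + B)" using A2 B2
    by (simp add: field_simps power2_eq_square)
  have "A \<le> sqrt (b'\<^sup>2)" unfolding A_def by (rule real_sqrt_le_mono) simp
  hence Ale: "A \<le> b'" using assms by simp
  have "B \<le> sqrt (b\<^sup>2)" unfolding B_def by (rule real_sqrt_le_mono) simp
  hence Ble: "B \<le> b" using assms by simp
  have "A \<le> b'" using Ale .
  have D: "b'\<^sup>2 - b\<^sup>2 = (b' - b) * (b' + b)" by (simp add: power2_eq_square algebra_simps)
  have "(b' - b) * (b' + b) / (b' + b) \<le> (b' - b) * (b' + b) / (A + B)"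
    using assms A2 B2 Ale Ble by (intro divide_left_mono) auto
  thus "b' - b \<le> A - B" using eq D assms by simp
  define C where "C = sqrt (1 - x\<^sup>2)"
  have C: "C > 0" "C \<le> 1" using x2 C_def by auto
  have ge: "\<And>g. g \<ge> 1 \<Longrightarrow> g * C \<le> sqrt (g\<^sup>2 - x\<^sup>2)"
  proof -
    fix g :: real assume g: "g \<ge> 1"
    have "g * C = sqrt (g\<^sup>2 * (1 - x\<^sup>2))" unfolding C_def using g by (simp add: real_sqrt_mult)
    also have "\<dots> \<le> sqrt (g\<^sup>2 - x\<^sup>2)"
    proof (rule real_sqrt_le_mono)
      have "1 \<le> g\<^sup>2" using g by (simp add: one_le_power)
      hence "1 * x\<^sup>2 \<le> g\<^sup>2 * x\<^sup>2" by (intro mult_right_mono) auto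
      hence "x\<^sup>2 \<le> g\<^sup>2 * x\<^sup>2" by simp
      thus "g\<^sup>2 * (1 - x\<^sup>2) \<le> g\<^sup>2 - x\<^sup>2" by (simp add: algebra_simps)
    qed
    finally show "g * C \<le> sqrt (g\<^sup>2 - x\<^sup>2)" .
  qed
  have "(b' + b) * C \<le> A + B" using ge[of b] ge[of b'] assms unfolding A_def B_def
    by (simp add: distrib_right)
  hence "(b' - b) * (b' + b) / (A + B) \<le> (b' - b) * (b' + b) / ((b' + b) * C)"
    using assms C A2 B2 by (intro divide_left_mono) auto
  thus "A - B \<le> (b' - b) / C" using eq D assms C by simp
qed

lemma frac_mono:
  fixes c x y :: real
  assumes "c \<ge> 1" "0 \<le> x" "x < y" "y < 1"
  shows "x / sqrt (c\<^sup>2 - x\<^sup>2) < y / sqrt (c\<^sup>2 - y\<^sup>2)"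
proof -
  have y2: "y\<^sup>2 < c\<^sup>2" using sqlt[of y c] assms by simp
  have xy: "x\<^sup>2 < y\<^sup>2" using sqlt[of x y] assms by simp
  have B: "sqrt (c\<^sup>2 - y\<^sup>2) > 0" using y2 by simp
  have A: "sqrt (c\<^sup>2 - x\<^sup>2) > 0" using xy y2 by simp
  have AB: "sqrt (c\<^sup>2 - y\<^sup>2) \<le> sqrt (c\<^sup>2 - x\<^sup>2)" using xy by simp
  have "x / sqrt (c\<^sup>2 - x\<^sup>2) \<le> x / sqrt (c\<^sup>2 - y\<^sup>2)"
    using B AB assms mult_pos_pos[OF A B] by (intro divide_left_mono) auto
  also have "\<dots> < y / sqrt (c\<^sup>2 - y\<^sup>2)" using B assms by (intro divide_strict_right_mono) auto
  finally show ?thesis .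
qed

lemma G_mono:
  assumes "p \<ge> 1" "q \<ge> 0" "b \<ge> 1" "0 \<le> x" "x < y" "y < 1"
  shows "GG p q b x < GG p q b y"
proof -
  have 1: "x / sqrt (1\<^sup>2 - x\<^sup>2) < y / sqrt (1\<^sup>2 - y\<^sup>2)" by (rule frac_mono) (use assms in auto)
  have 2: "x / sqrt (b\<^sup>2 - x\<^sup>2) < y / sqrt (b\<^sup>2 - y\<^sup>2)" by (rule frac_mono) (use assms in auto)
  have "p * (x / sqrt (1 - x\<^sup>2)) < p * (y / sqrt (1 - y\<^sup>2))" by (rule mult_strict_left_mono) (use 1 assms in auto)
  moreover have "q * (x / sqrt (b\<^sup>2 - x\<^sup>2)) \<le> q * (y / sqrt (b\<^sup>2 - y\<^sup>2))"
    using 2 assms by (intro mult_left_mono) auto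
  ultimately show ?thesis unfolding GG_def by simp
qed

lemma G_ex1:
  assumes p: "p \<ge> 1" and q: "q \<ge> 0" and b: "b \<ge> 1"
  shows "\<exists>!s. 0 < s \<and> s < 1 \<and> GG p q b s = 1"
proof -
  have cont: "continuous_on {0..3/4} (GG p q b)"
  proof -
    have "\<And>x. x \<in> {0..3/4::real} \<Longrightarrow> 1 - x\<^sup>2 > 0 \<and> b\<^sup>2 - x\<^sup>2 > 0"
    proof -
      fix x :: real assume "x \<in> {0..3/4}"
      hence "x\<^sup>2 < 1" "x\<^sup>2 < b\<^sup>2" using sqlt[of x 1] sqlt[of x b] b by auto
      thus "1 - x\<^sup>2 > 0 \<and> b\<^sup>2 - x\<^sup>2 > 0" by simp
    qed
    thus ?thesis unfolding GG_def
      by (intro continuous_intros) (auto simp del: atLeastAtMost_iff, force+)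
  qed
  have G0: "GG p q b 0 = 0" unfolding GG_def by simp
  have "GG p q b (3/4) \<ge> 1"
  proof -
    have s7: "sqrt (1 - (3/4::real)\<^sup>2) = sqrt 7 / 4"
      by (simp add: power2_eq_square real_sqrt_divide)
    have "sqrt 7 \<le> sqrt (3\<^sup>2)" by (rule real_sqrt_le_mono) simp
    hence "sqrt 7 \<le> 3" by simp
    hence "1 \<le> (3/4) / sqrt (1 - (3/4::real)\<^sup>2)" unfolding s7 by (simp add: field_simps)
    also have "\<dots> \<le> p * ((3/4) / sqrt (1 - (3/4::real)\<^sup>2))" using mult_right_mono[OF p, of "(3/4) / sqrt (1 - (3/4::real)\<^sup>2)"] by (simp add: power2_eq_square)
    finally have "1 \<le> p * (3/4) / sqrt (1 - (3/4::real)\<^sup>2)" by simp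
    moreover have "q * (3/4) / sqrt (b\<^sup>2 - (3/4)\<^sup>2) \<ge> 0"
    proof -
      have "b\<^sup>2 \<ge> 1" using b by (simp add: one_le_power)
      hence "sqrt (b\<^sup>2 - (3/4)\<^sup>2) \<ge> 0" by (simp add: power2_eq_square)
      thus ?thesis using q by simp
    qed
    ultimately show ?thesis unfolding GG_def by linarith
  qed
  then obtain s where s: "0 \<le> s" "s \<le> 3/4" "GG p q b s = 1"
    using IVT'[of "GG p q b" 0 1 "3/4"] G0 cont by auto
  have "s \<noteq> 0" using s G0 by auto
  hence ex: "0 < s \<and> s < 1 \<and> GG p q b s = 1" using s by auto
  show ?thesis
  proof (rule ex1I[of _ s])
    show "0 < s \<and> s < 1 \<and> GG p q b s = 1" by (rule ex)
  next
    fix y assume y: "0 < y \<and> y < 1 \<and> GG p q b y = 1"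
    show "y = s"
    proof (rule ccontr)
      assume "y \<noteq> s"
      hence "y < s \<or> s < y" by auto
      thus False using G_mono[OF p q b, of y s] G_mono[OF p q b, of s y] y ex by auto
    qed
  qed
qed

lemma sigma_ok:
  assumes "pf t \<ge> 1" "qf t \<ge> 0" "b \<ge> 1"
  shows "0 < sigma_hat t b \<and> sigma_hat t b < 1 \<and> GG (pf t) (qf t) b (sigma_hat t b) = 1"
proof -
  have "\<exists>!s. 0 < s \<and> s < 1 \<and> GG (pf t) (qf t) b s = 1" by (rule G_ex1) (use assms in auto)
  hence "\<exists>!s. 0 < s \<and> s < 1 \<and> pf t * s / sqrt (1 - s\<^sup>2) + qf t * s / sqrt (b\<^sup>2 - s\<^sup>2) = 1"
    unfolding GG_def .
  from theI'[OF this] show ?thesis unfolding sigma_hat_def GG_def .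
qed

lemma lf_eq:
  assumes "pf t \<ge> 1" "qf t \<ge> 0" "b \<ge> 1"
  shows "lf t b = FF (pf t) (qf t) b (sigma_hat t b) - t - sqrt 2"
  using sigma_ok[OF assms] valF[of b "sigma_hat t b" "pf t" "qf t"] assms
  unfolding lf_def by auto

lemma lf_max:
  assumes "pf t \<ge> 1" "qf t \<ge> 0" "b \<ge> 1" "0 \<le> x" "x \<le> 1"
  shows "FF (pf t) (qf t) b x - t - sqrt 2 \<le> lf t b"
  using sigma_ok[OF assms(1-3)] maxF[of "pf t" "qf t" b "sigma_hat t b" x] assms lf_eq[OF assms(1-3)]
  by auto

lemma pq_even: "qf (2 * real k) = k" "pf (2 * real k) = k + 1"
proof -
  have f: "\<lfloor>2 * real k\<rfloor> = 2 * int k" by (metis floor_of_int of_int_mult of_int_numeral of_int_of_nat_eq)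
  show "qf (2 * real k) = k" unfolding qf_def f by simp
  thus "pf (2 * real k) = k + 1" unfolding pf_def by simp
qed

lemma pq_even2: "qf (2 * real k + 2) = k + 1" "pf (2 * real k + 2) = k + 2"
  using pq_even[of "Suc k"] by (simp_all add: algebra_simps)

lemma bsq:
  assumes P: "P \<ge> 0" and Q: "Q \<ge> 0" and be: "be \<ge> 1" and b: "0 < b" "b < 1"
    and G: "GG P Q be b = 1"
  shows "P * b \<le> sqrt (1 - b\<^sup>2)" "P\<^sup>2 * b\<^sup>2 \<le> 1 - b\<^sup>2"
proof -
  have b2: "b\<^sup>2 < 1" using sqlt[of b 1] b by simp
  have "b\<^sup>2 < be\<^sup>2" using sqlt[of b be] b be by simp
  hence "Q * b / sqrt (be\<^sup>2 - b\<^sup>2) \<ge> 0" using Q b by simp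
  hence "P * b / sqrt (1 - b\<^sup>2) \<le> 1" using G unfolding GG_def by linarith
  moreover have C: "sqrt (1 - b\<^sup>2) > 0" using b2 by simp
  ultimately show 1: "P * b \<le> sqrt (1 - b\<^sup>2)" by (simp add: divide_le_eq)
  have "(P * b)\<^sup>2 \<le> (sqrt (1 - b\<^sup>2))\<^sup>2" using 1 P b by (intro power_mono) auto
  thus "P\<^sup>2 * b\<^sup>2 \<le> 1 - b\<^sup>2" using b2 by (simp add: power_mult_distrib)
qed

lemma keybound:
  fixes k b :: real
  assumes k: "k \<ge> 0" and b: "0 < b" "b < 1" and h: "(k + 1)\<^sup>2 * b\<^sup>2 \<le> 1 - b\<^sup>2"
  shows "k / sqrt (1 - b\<^sup>2) < k + 1"
proof -
  have b2: "b\<^sup>2 < 1" using sqlt[of b 1] b by simp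
  define C where "C = sqrt (1 - b\<^sup>2)"
  have C: "C > 0" "C\<^sup>2 = 1 - b\<^sup>2" using b2 C_def by auto
  have "k < (k + 1) * C"
  proof (rule ccontr)
    assume "\<not> k < (k + 1) * C"
    hence "(k + 1) * C \<le> k" by simp
    hence "((k + 1) * C)\<^sup>2 \<le> k\<^sup>2" using C k by (intro power_mono) auto
    hence "(k + 1)\<^sup>2 * (1 - b\<^sup>2) \<le> k\<^sup>2" using C by (simp add: power_mult_distrib)
    moreover have "b\<^sup>2 > 0" using b by simp
    ultimately show False using h k by (simp add: power2_eq_square algebra_simps)
  qed
  thus ?thesis using C unfolding C_def[symmetric] by (simp add: divide_less_eq)
qed

lemma cs_bound:
  fixes m x :: real
  assumes "m \<ge> 0" "0 \<le> x" "x \<le> 1"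
  shows "m * sqrt (1 - x\<^sup>2) + x \<le> sqrt (m\<^sup>2 + 1)"
proof -
  define y where "y = sqrt (1 - x\<^sup>2)"
  have x2: "x\<^sup>2 \<le> 1" using assms by (simp add: power_le_one)
  have y2: "y\<^sup>2 = 1 - x\<^sup>2" "y \<ge> 0" using x2 y_def by auto
  have e: "(m * y + x)\<^sup>2 + (m * x - y)\<^sup>2 = (m\<^sup>2 + 1) * (y\<^sup>2 + x\<^sup>2)"
    by (simp add: power2_eq_square algebra_simps)
  have "y\<^sup>2 + x\<^sup>2 = 1" using y2 by simp
  with e have e2: "(m * y + x)\<^sup>2 + (m * x - y)\<^sup>2 = m\<^sup>2 + 1" by simp
  have "(m * y + x)\<^sup>2 \<le> (m\<^sup>2 + 1)" using e2 zero_le_power2[of "m * x - y"] by linarith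
  hence "sqrt ((m * y + x)\<^sup>2) \<le> sqrt (m\<^sup>2 + 1)" by (rule real_sqrt_le_mono)
  moreover have "m * y + x \<ge> 0" using y2 assms by simp
  ultimately show ?thesis unfolding y_def[symmetric] by (simp only: real_sqrt_abs abs_of_nonneg)
qed

lemma at_one:
  assumes "pf t \<ge> 1" "qf t \<ge> 0"
  shows "lf t 1 = sqrt ((pf t + qf t)\<^sup>2 + 1) - t - sqrt 2"
proof -
  define m where "m = pf t + qf t"
  have m: "m \<ge> 1" using assms m_def by simp
  have FF1: "\<And>x. FF (pf t) (qf t) 1 x = m * sqrt (1 - x\<^sup>2) + x"
    unfolding FF_def m_def by (simp add: distrib_right)
  have so: "0 < sigma_hat t 1 \<and> sigma_hat t 1 < 1 \<and> GG (pf t) (qf t) 1 (sigma_hat t 1) = 1"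
    using sigma_ok[OF assms] by simp
  have "m * sqrt (1 - (sigma_hat t 1)\<^sup>2) + sigma_hat t 1 \<le> sqrt (m\<^sup>2 + 1)"
    by (rule cs_bound) (use m so in auto)
  hence up: "lf t 1 \<le> sqrt (m\<^sup>2 + 1) - t - sqrt 2"
    unfolding lf_eq[OF assms order_refl] FF1 by linarith
  define R where "R = sqrt (m\<^sup>2 + 1)"
  have pos: "m\<^sup>2 + 1 > 0" using zero_le_power2[of m] by linarith
  have R2: "R\<^sup>2 = m\<^sup>2 + 1" unfolding R_def using pos by simp
  have "sqrt 1 \<le> R" unfolding R_def by (rule real_sqrt_le_mono) simp
  hence R1: "R \<ge> 1" by simp
  define x0 where "x0 = 1 / R"
  have x0: "0 \<le> x0" "x0 \<le> 1" using R1 x0_def by auto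
  have "(m / R)\<^sup>2 = m\<^sup>2 / R\<^sup>2" by (simp add: power_divide)
  also have "\<dots> = (R\<^sup>2 - 1) / R\<^sup>2" using R2 by simp
  also have "\<dots> = 1 - 1 / R\<^sup>2" using R1 by (simp add: diff_divide_distrib)
  also have "\<dots> = 1 - x0\<^sup>2" unfolding x0_def by (simp add: power_divide)
  finally have "sqrt (1 - x0\<^sup>2) = sqrt ((m / R)\<^sup>2)" by simp
  also have "\<dots> = m / R" using m R1 by simp
  finally have sq: "sqrt (1 - x0\<^sup>2) = m / R" .
  have "FF (pf t) (qf t) 1 x0 = m * (m / R) + 1 / R" using FF1 sq unfolding x0_def by simp
  also have "\<dots> = R\<^sup>2 / R" using R2 by (simp add: add_divide_distrib power2_eq_square)
  also have "\<dots> = R" by (simp add: power2_eq_square)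
  finally have "FF (pf t) (qf t) 1 x0 = R" .
  hence "R - t - sqrt 2 \<le> lf t 1" using lf_max[OF assms, of 1 x0] x0 by simp
  with up show ?thesis unfolding R_def m_def by simp
qed

lemma sqrt2_bound: "sqrt 2 < ((71/50)::real)"
proof -
  have "sqrt 2 < sqrt ((71/50)\<^sup>2)" by (rule real_sqrt_less_mono) (simp add: power2_eq_square)
  thus ?thesis by simp
qed

lemma lb_sqrt: "(x::real) \<ge> 0 \<Longrightarrow> x\<^sup>2 \<le> y \<Longrightarrow> x \<le> sqrt y"
  by (simp add: real_le_rsqrt)

lemma delta_mono:
  assumes b: "1 \<le> be" "be < be'"
  shows "delta k be < delta k be'"
proof -
  define t1 where "t1 = 2 * real k"
  define t2 where "t2 = 2 * real k + 2"
  have p1: "pf t1 = k + 1" "qf t1 = k" unfolding t1_def using pq_even by auto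
  have p2: "pf t2 = k + 2" "qf t2 = k + 1" unfolding t2_def using pq_even2 by auto
  have A1: "pf t1 \<ge> 1" "qf t1 \<ge> 0" "pf t2 \<ge> 1" "qf t2 \<ge> 0" using p1 p2 by auto
  have b': "be' \<ge> 1" using b by simp
  define a where "a = sigma_hat t2 be"
  define c where "c = sigma_hat t1 be'"
  have sa: "0 < a" "a < 1" using sigma_ok[OF A1(3,4) b(1)] a_def by auto
  have sc: "0 < c" "c < 1" "GG (pf t1) (qf t1) be' c = 1" using sigma_ok[OF A1(1,2) b'] c_def by auto
  have e1: "lf t2 be' \<ge> FF (pf t2) (qf t2) be' a - t2 - sqrt 2"
    by (rule lf_max) (use A1 b' sa in auto)
  have e2: "lf t2 be = FF (pf t2) (qf t2) be a - t2 - sqrt 2"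
    unfolding a_def by (rule lf_eq) (use A1 b in auto)
  have e3: "lf t1 be' = FF (pf t1) (qf t1) be' c - t1 - sqrt 2"
    unfolding c_def by (rule lf_eq) (use A1 b' in auto)
  have e4: "lf t1 be \<ge> FF (pf t1) (qf t1) be c - t1 - sqrt 2"
    by (rule lf_max) (use A1 b sc in auto)
  have d2: "FF (pf t2) (qf t2) be' a - FF (pf t2) (qf t2) be a
      = (real k + 1) * (sqrt (be'\<^sup>2 - a\<^sup>2) - sqrt (be\<^sup>2 - a\<^sup>2))"
    unfolding FF_def p2 by (simp add: algebra_simps)
  have d1: "FF (pf t1) (qf t1) be' c - FF (pf t1) (qf t1) be c
      = k * (sqrt (be'\<^sup>2 - c\<^sup>2) - sqrt (be\<^sup>2 - c\<^sup>2))"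
    unfolding FF_def p1 by (simp add: algebra_simps)
  have h1: "be' - be \<le> sqrt (be'\<^sup>2 - a\<^sup>2) - sqrt (be\<^sup>2 - a\<^sup>2)"
    using hbounds(1)[OF b] sa by auto
  have h2: "sqrt (be'\<^sup>2 - c\<^sup>2) - sqrt (be\<^sup>2 - c\<^sup>2) \<le> (be' - be) / sqrt (1 - c\<^sup>2)"
    using hbounds(2)[OF b] sc by auto
  have "(real k + 1)\<^sup>2 * c\<^sup>2 \<le> 1 - c\<^sup>2"
    using bsq(2)[of "pf t1" "qf t1" be' c] A1 b' sc p1 by (simp add: add.commute)
  hence kb: "real k / sqrt (1 - c\<^sup>2) < real k + 1" using keybound[of "real k" c] sc by simp
  have "k * (sqrt (be'\<^sup>2 - c\<^sup>2) - sqrt (be\<^sup>2 - c\<^sup>2)) \<le> k * ((be' - be) / sqrt (1 - c\<^sup>2))"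
    using h2 by (intro mult_left_mono) auto
  also have "\<dots> = (real k / sqrt (1 - c\<^sup>2)) * (be' - be)" by simp
  also have "\<dots> < (real k + 1) * (be' - be)" using kb b by (intro mult_strict_right_mono) auto
  also have "\<dots> \<le> (real k + 1) * (sqrt (be'\<^sup>2 - a\<^sup>2) - sqrt (be\<^sup>2 - a\<^sup>2))"
    using h1 by (intro mult_left_mono) auto
  finally have "k * (sqrt (be'\<^sup>2 - c\<^sup>2) - sqrt (be\<^sup>2 - c\<^sup>2))
     < (real k + 1) * (sqrt (be'\<^sup>2 - a\<^sup>2) - sqrt (be\<^sup>2 - a\<^sup>2))" .
  moreover have "delta k be = lf t2 be - lf t1 be" "delta k be' = lf t2 be' - lf t1 be'"
    unfolding delta_def t1_def t2_def by simp_all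
  ultimately show ?thesis using e1 e2 e3 e4 d1 d2 by linarith
qed

lemma delta_one: "delta k 1 < 0"
proof -
  define n where "n = 2 * real k + 1"
  have n: "n \<ge> 1" unfolding n_def by simp
  have l1: "lf (2 * real k) 1 = sqrt (n\<^sup>2 + 1) - 2 * real k - sqrt 2"
    using at_one[of "2 * real k"] pq_even[of k] unfolding n_def by (simp add: algebra_simps)
  have l2: "lf (2 * real k + 2) 1 = sqrt ((n + 2)\<^sup>2 + 1) - (2 * real k + 2) - sqrt 2"
    using at_one[of "2 * real k + 2"] pq_even2[of k] unfolding n_def by (simp add: algebra_simps)
  have "sqrt ((n + 2)\<^sup>2 + 1) < 2 + sqrt (n\<^sup>2 + 1)"
  proof -
    have s: "sqrt (n\<^sup>2 + 1) > n"
    proof -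
      have "sqrt (n\<^sup>2) < sqrt (n\<^sup>2 + 1)" by (rule real_sqrt_less_mono) simp
      thus ?thesis using n by simp
    qed
    have q: "(sqrt (n\<^sup>2 + 1))\<^sup>2 = n\<^sup>2 + 1" using zero_le_power2[of n] by simp
    have "(n + 2)\<^sup>2 + 1 < (2 + sqrt (n\<^sup>2 + 1))\<^sup>2"
      using s q by (simp add: power2_eq_square algebra_simps)
    hence "sqrt ((n + 2)\<^sup>2 + 1) < sqrt ((2 + sqrt (n\<^sup>2 + 1))\<^sup>2)" by (rule real_sqrt_less_mono)
    moreover have "2 + sqrt (n\<^sup>2 + 1) \<ge> 0" using s n by linarith
    ultimately show ?thesis by simp
  qed
  thus ?thesis unfolding delta_def l1 l2 by simp
qed

lemma delta_sqrt2: "delta k (sqrt 2) > 0"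
proof -
  define t1 where "t1 = 2 * real k"
  define t2 where "t2 = 2 * real k + 2"
  have p1: "pf t1 = k + 1" "qf t1 = k" unfolding t1_def using pq_even by auto
  have p2: "pf t2 = k + 2" "qf t2 = k + 1" unfolding t2_def using pq_even2 by auto
  have A1: "pf t1 \<ge> 1" "qf t1 \<ge> 0" "pf t2 \<ge> 1" "qf t2 \<ge> 0" using p1 p2 by auto
  have r2: "sqrt 2 \<ge> (1::real)" by simp
  have s22: "(sqrt 2)\<^sup>2 = (2::real)" by simp
  have dd: "delta k (sqrt 2) = lf t2 (sqrt 2) - lf t1 (sqrt 2)"
    unfolding delta_def t1_def t2_def by simp
  show ?thesis
  proof (cases "k = 0")
    case True
    have t1: "t1 = 0" "t2 = 2" unfolding t1_def t2_def using True by auto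
    have q1: "pf t1 = 1" "qf t1 = 0" "pf t2 = 2" "qf t2 = 1" using p1 p2 True by auto
    define c where "c = sigma_hat t1 (sqrt 2)"
    have sc: "0 < c" "c < 1" using sigma_ok[OF A1(1,2) r2] c_def by auto
    have "1 * sqrt (1 - c\<^sup>2) + c \<le> sqrt (1\<^sup>2 + 1)" by (rule cs_bound) (use sc in auto)
    moreover have "lf t1 (sqrt 2) = FF (pf t1) (qf t1) (sqrt 2) c - t1 - sqrt 2"
      unfolding c_def by (rule lf_eq) (use A1 in auto)
    ultimately have l1: "lf t1 (sqrt 2) \<le> 0"
      unfolding FF_def q1 using t1 by simp
    have l2: "lf t2 (sqrt 2) \<ge> FF 2 1 (sqrt 2) (3/5) - 2 - sqrt 2"
      using lf_max[OF A1(3,4) r2, of "3/5"] q1 t1 by simp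
    have "sqrt (1 - (3/5::real)\<^sup>2) = sqrt ((4/5)\<^sup>2)" by (simp add: power2_eq_square)
    hence e1: "sqrt (1 - (3/5::real)\<^sup>2) = 4/5" by simp
    have e2: "sqrt ((sqrt 2)\<^sup>2 - (3/5::real)\<^sup>2) \<ge> (32/25)"
      by (rule lb_sqrt) (simp_all add: power2_eq_square)
    have "FF 2 1 (sqrt 2) (3/5) \<ge> 2 * (4/5) + (32/25) + 3/5"
      unfolding FF_def e1 using e2 by simp
    thus ?thesis using dd l1 l2 sqrt2_bound by linarith
  next
    case False
    hence k1: "real k \<ge> 1" by simp
    define c where "c = sigma_hat t1 (sqrt 2)"
    have sc: "0 < c" "c < 1" "GG (pf t1) (qf t1) (sqrt 2) c = 1"
      using sigma_ok[OF A1(1,2) r2] c_def by auto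
    have e3: "lf t1 (sqrt 2) = FF (pf t1) (qf t1) (sqrt 2) c - t1 - sqrt 2"
      unfolding c_def by (rule lf_eq) (use A1 in auto)
    have e1: "lf t2 (sqrt 2) \<ge> FF (pf t2) (qf t2) (sqrt 2) c - t2 - sqrt 2"
      by (rule lf_max) (use A1 sc in auto)
    have d: "FF (pf t2) (qf t2) (sqrt 2) c - FF (pf t1) (qf t1) (sqrt 2) c
        = sqrt (1 - c\<^sup>2) + sqrt (2 - c\<^sup>2)"
      unfolding FF_def p1 p2 s22 by (simp add: algebra_simps)
    have t21: "t2 = t1 + 2" unfolding t1_def t2_def by simp
    have "(real k + 1)\<^sup>2 * c\<^sup>2 \<le> 1 - c\<^sup>2"
      using bsq(2)[of "pf t1" "qf t1" "sqrt 2" c] A1 sc p1 by (simp add: add.commute)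
    moreover have "4 * c\<^sup>2 \<le> (real k + 1)\<^sup>2 * c\<^sup>2"
    proof (rule mult_right_mono)
      have "(2::real)\<^sup>2 \<le> (real k + 1)\<^sup>2" using k1 by (intro power_mono) auto
      thus "4 \<le> (real k + 1)\<^sup>2" by simp
    qed simp
    ultimately have c5: "5 * c\<^sup>2 \<le> 1" by linarith
    have f1: "sqrt (1 - c\<^sup>2) \<ge> (89/100)" by (rule lb_sqrt) (use c5 in \<open>simp_all add: power2_eq_square\<close>)
    have f2: "sqrt (2 - c\<^sup>2) \<ge> (67/50)" by (rule lb_sqrt) (use c5 in \<open>simp_all add: power2_eq_square\<close>)
    show ?thesis using dd e1 e3 d t21 f1 f2 by linarith
  qed
qed

theorem lemma3p10:
  fixes k :: nat
  shows "strict_mono_on {1..} (delta k) \<and> delta k 1 < 0 \<and> delta k (sqrt 2) > 0"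
proof (intro conjI)
  show "strict_mono_on {1..} (delta k)"
    by (rule strict_mono_onI) (auto intro: delta_mono)
  show "delta k 1 < 0" by (rule delta_one)
  show "delta k (sqrt 2) > 0" by (rule delta_sqrt2)
qed

end
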